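(* Let $A$ be a non-zero linear endomorphism of $\mathbb{E}^n$ and $\mathbf{b}$ an orthonormal basis. (a) If $n$ is odd, the forms $\mathbf{A}^r_{kl}$ ($1\le k<l\le n$) have at least one common non-zero zero. (b) The non-zero linear subspaces $W\subseteq\mathbb{E}^n$ that are maximal (under inclusion) among subspaces on which every $\mathbf{A}^r_{kl}$ vanishes identically are exactly the eigenspaces of $A$ for its real eigenvalues; in particular the dimension of such a maximal common zero-valued subspace equals the geometric multiplicity of the corresponding eigenvalue of $A$.
   Context: $\mathbb{E}^n$ is $\mathbb{R}^n$ with the standard inner product. For an orthonormal basis $\mathbf{b}=\{b_1,\dots,b_n\}$ and $1\le k<l\le n$, $R_{kl}$ is the linear map with $R_{kl}(b_k)=b_l$, $R_{kl}(b_l)=-b_k$, $R_{kl}(b_m)=0$ for $m\ne k,l$. The rotation forms of $A$ are $\mathbf{A}^r_{kl}(u):=A(u)\cdot R_{kl}(u)$. *)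

theory Defs
  imports "HOL-Analysis.Analysis"
begin

text \<open>E^n is modelled by an arbitrary Euclidean space 'a with n = DIM('a).
  An orthonormal basis b_1..b_n is modelled as b :: nat => 'a on indices 0..n-1.\<close>

definition orthonormal_basis :: "(nat \<Rightarrow> 'a::euclidean_space) \<Rightarrow> bool" where
  "orthonormal_basis b \<longleftrightarrow>
     (\<forall>i<DIM('a). \<forall>j<DIM('a). b i \<bullet> b j = (if i = j then 1 else 0))"

definition rot :: "(nat \<Rightarrow> 'a::euclidean_space) \<Rightarrow> nat \<Rightarrow> nat \<Rightarrow> 'a \<Rightarrow> 'a" where
  "rot b k l u = (u \<bullet> b k) *\<^sub>R b l - (u \<bullet> b l) *\<^sub>R b k"

definition rotation_form ::
  "('a::euclidean_space \<Rightarrow> 'a) \<Rightarrow> (nat \<Rightarrow> 'a) \<Rightarrow> nat \<Rightarrow> nat \<Rightarrow> 'a \<Rightarrow> real" where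
  "rotation_form A b k l u = A u \<bullet> rot b k l u"

definition common_zero_subspace ::
  "('a::euclidean_space \<Rightarrow> 'a) \<Rightarrow> (nat \<Rightarrow> 'a) \<Rightarrow> 'a set \<Rightarrow> bool" where
  "common_zero_subspace A b W \<longleftrightarrow> subspace W \<and>
     (\<forall>u\<in>W. \<forall>k l. k < l \<and> l < DIM('a) \<longrightarrow> rotation_form A b k l u = 0)"

definition maximal_common_zero_subspace ::
  "('a::euclidean_space \<Rightarrow> 'a) \<Rightarrow> (nat \<Rightarrow> 'a) \<Rightarrow> 'a set \<Rightarrow> bool" where
  "maximal_common_zero_subspace A b W \<longleftrightarrow> common_zero_subspace A b W \<and> W \<noteq> {0} \<and>
     (\<forall>W'. common_zero_subspace A b W' \<and> W \<subseteq> W' \<longrightarrow> W' = W)"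

definition real_eigenvalue :: "('a::real_vector \<Rightarrow> 'a) \<Rightarrow> real \<Rightarrow> bool" where
  "real_eigenvalue A c \<longleftrightarrow> (\<exists>v. v \<noteq> 0 \<and> A v = c *\<^sub>R v)"

definition eigenspace :: "('a::real_vector \<Rightarrow> 'a) \<Rightarrow> real \<Rightarrow> 'a set" where
  "eigenspace A c = {v. A v = c *\<^sub>R v}"

definition geom_mult :: "('a::euclidean_space \<Rightarrow> 'a) \<Rightarrow> real \<Rightarrow> nat" where
  "geom_mult A c = dim (eigenspace A c)"

end

theory Submission
  imports Defs "Jordan_Normal_Form.Char_Poly"
begin

lemma odd_poly_root:
  fixes p :: "real poly"
  assumes "odd (degree p)" "lead_coeff p = 1"
  shows "\<exists>x. poly p x = 0"
proof -
  define r where "r = reflect_poly p"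
  define n where "n = degree p"
  have r0: "poly r 0 = 1" using assms by (simp add: r_def)
  have "isCont (poly r) 0" by simp
  then have "\<exists>d>0. \<forall>t. dist t 0 < d \<longrightarrow> dist (poly r t) (poly r 0) < 1/2"
    unfolding continuous_at_eps_delta by (erule_tac x="1/2" in allE) simp
  then obtain d where d: "d > 0" "\<And>t. dist t 0 < d \<Longrightarrow> dist (poly r t) (poly r 0) < 1/2"
    by blast
  have rpos: "poly r t > 0" if "\<bar>t\<bar> < d" for t
    using d(2)[of t] that r0 by (auto simp: dist_real_def abs_less_iff abs_if split: if_splits)
  have rep: "poly p x = x ^ n * poly r (1/x)" if "x \<noteq> 0" for x
    using poly_reflect_poly_nz[of "1/x" p] that by (simp add: r_def n_def field_simps power_one_over)
  define x where "x = 2 / d"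
  have x: "x > 0" "\<bar>1/x\<bar> < d" "\<bar>-1/x\<bar> < d" using d by (auto simp: x_def)
  have p1: "poly p x > 0" using rep[of x] x rpos[of "1/x"] by simp
  have p2: "poly p (-x) < 0"
  proof -
    have "(-x) ^ n < 0" using x assms(1) by (simp add: n_def power_minus_odd)
    then show ?thesis using rep[of "-x"] x rpos[of "-1/x"] by (simp add: mult_neg_pos)
  qed
  have "\<exists>y\<ge>-x. y \<le> x \<and> poly p y = 0"
    using p1 p2 x by (intro IVT) auto
  then show ?thesis by blast
qed
lemma ortho_zero:
  fixes b :: "nat \<Rightarrow> 'a::euclidean_space"
  assumes ob: "orthonormal_basis b" and w: "\<And>i. i < DIM('a) \<Longrightarrow> w \<bullet> b i = 0"
  shows "w = 0"
proof -
  define B where "B = b ` {..<DIM('a)}"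
  have bb: "b i \<bullet> b j = (if i = j then 1 else 0)" if "i < DIM('a)" "j < DIM('a)" for i j
    using ob that unfolding orthonormal_basis_def by blast
  have inj: "inj_on b {..<DIM('a)}"
    by (rule inj_onI) (metis bb lessThan_iff zero_neq_one)
  have cardB: "card B = DIM('a)" using inj by (simp add: B_def card_image)
  have "pairwise real_inner_class.orthogonal B"
    unfolding pairwise_def B_def real_inner_class.orthogonal_def using bb by fastforce
  moreover have "0 \<notin> B" unfolding B_def using bb by fastforce
  ultimately have ind: "independent B" by (rule pairwise_orthogonal_independent)
  have "UNIV \<subseteq> span B"
    by (rule card_ge_dim_independent) (use ind cardB in auto)
  then have "w \<in> span B" by auto
  moreover have "real_inner_class.orthogonal w y" if "y \<in> B" for y
    using that w unfolding B_def real_inner_class.orthogonal_def by auto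
  ultimately have "real_inner_class.orthogonal w w" by (rule orthogonal_to_span)
  then show ?thesis by (simp add: real_inner_class.orthogonal_def)
qed

lemma odd_eigen:
  fixes A :: "'a::euclidean_space \<Rightarrow> 'a" and b :: "nat \<Rightarrow> 'a"
  assumes lin: "linear A" and ob: "orthonormal_basis b" and odd: "odd DIM('a)"
  shows "\<exists>u c. u \<noteq> 0 \<and> A u = c *\<^sub>R u"
proof -
  define n where "n = DIM('a)"
  have bb: "b i \<bullet> b j = (if i = j then 1 else 0)" if "i < n" "j < n" for i j
    using ob that unfolding orthonormal_basis_def n_def by blast
  define M :: "real Matrix.mat" where "M = Matrix.mat n n (\<lambda>(i,j). A (b j) \<bullet> b i)"
  have M: "M \<in> carrier_mat n n" by (simp add: M_def)
  from degree_monic_char_poly[OF M] have "degree (char_poly M) = n" "lead_coeff (char_poly M) = 1" by auto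
  then obtain c where "poly (char_poly M) c = 0" using odd_poly_root odd n_def by metis
  then have "eigenvalue M c" using eigenvalue_root_char_poly[OF M] by simp
  then obtain v where ev: "eigenvector M v c" unfolding eigenvalue_def by blast
  then have v: "v \<in> carrier_vec n" "v \<noteq> 0\<^sub>v n" "M *\<^sub>v v = c \<cdot>\<^sub>v v"
    unfolding eigenvector_def using M by auto
  have dv: "dim_vec v = n" using v by auto
  define u where "u = (\<Sum>j<n. vec_index v j *\<^sub>R b j)"
  have ub: "u \<bullet> b i = vec_index v i" if "i < n" for i
  proof -
    have "u \<bullet> b i = (\<Sum>j<n. vec_index v j * (b j \<bullet> b i))"
      unfolding u_def by (simp add: inner_sum_left)
    also have "\<dots> = (\<Sum>j<n. if j = i then vec_index v j else 0)"
      by (rule sum.cong) (use bb that in auto)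
    also have "\<dots> = vec_index v i" using that by simp
    finally show ?thesis .
  qed
  have Aub: "A u \<bullet> b i = c * vec_index v i" if "i < n" for i
  proof -
    have "A u = (\<Sum>j<n. vec_index v j *\<^sub>R A (b j))"
      unfolding u_def by (simp add: linear_sum[OF lin] linear_scale[OF lin])
    then have "A u \<bullet> b i = (\<Sum>j<n. vec_index v j * (A (b j) \<bullet> b i))"
      by (simp add: inner_sum_left)
    also have "\<dots> = vec_index (M *\<^sub>v v) i"
      using that dv M by (simp add: M_def scalar_prod_def mult.commute atLeast0LessThan)
    also have "\<dots> = c * vec_index v i" using v that by simp
    finally show ?thesis .
  qed
  have "A u - c *\<^sub>R u = 0"
    by (rule ortho_zero[OF ob]) (simp add: inner_diff_left Aub ub n_def)
  moreover have "u \<noteq> 0"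
  proof
    assume "u = 0"
    then have "vec_index v i = 0" if "i < n" for i using ub[OF that] by simp
    then have "v = 0\<^sub>v n" by (intro eq_vecI) (auto simp: dv)
    with v show False by simp
  qed
  ultimately show ?thesis by auto
qed

lemma eig_forms_zero:
  assumes "A u = c *\<^sub>R u"
  shows "rotation_form A b k l u = 0"
  using assms by (simp add: rotation_form_def rot_def inner_diff_right algebra_simps inner_commute)

lemma forms_zero_eig:
  fixes A :: "'a::euclidean_space \<Rightarrow> 'a" and b :: "nat \<Rightarrow> 'a"
  assumes lin: "linear A" and ob: "orthonormal_basis b"
    and z: "\<forall>k l. k < l \<and> l < DIM('a) \<longrightarrow> rotation_form A b k l u = 0"
  shows "\<exists>c. A u = c *\<^sub>R u"
proof (cases "u = 0")
  case True then show ?thesis using linear_0[OF lin] by auto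
next
  case False
  define x where "x = A u"
  have sym: "(x \<bullet> b l) * (u \<bullet> b k) = (x \<bullet> b k) * (u \<bullet> b l)"
    if "k < DIM('a)" "l < DIM('a)" for k l
  proof -
    have "k < l \<or> k = l \<or> l < k" by auto
    then show ?thesis
    proof (elim disjE)
      assume "k < l"
      then have "rotation_form A b k l u = 0" using z that by blast
      then show ?thesis by (simp add: rotation_form_def rot_def x_def inner_diff_right algebra_simps)
    next
      assume "l < k"
      then have "rotation_form A b l k u = 0" using z that by blast
      then show ?thesis by (simp add: rotation_form_def rot_def x_def inner_diff_right algebra_simps)
    qed simp
  qed
  obtain m where m: "m < DIM('a)" "u \<bullet> b m \<noteq> 0" using ortho_zero[OF ob, of u] False by blast
  define c where "c = (x \<bullet> b m) / (u \<bullet> b m)"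
  have "x - c *\<^sub>R u = 0"
  proof (rule ortho_zero[OF ob])
    fix i assume i: "i < DIM('a)"
    have "(x \<bullet> b i) * (u \<bullet> b m) = (x \<bullet> b m) * (u \<bullet> b i)" using sym[OF m(1) i] .
    then show "(x - c *\<^sub>R u) \<bullet> b i = 0" using m(2)
      by (simp add: c_def inner_diff_left field_simps)
  qed
  then show ?thesis unfolding x_def by auto
qed

lemma eigenspace_czs:
  assumes lin: "linear A"
  shows "common_zero_subspace A b (eigenspace A c)"
  unfolding common_zero_subspace_def
proof
  show "subspace (eigenspace A c)"
    unfolding subspace_def eigenspace_def
    by (simp add: linear_0[OF lin] linear_add[OF lin] linear_scale[OF lin] algebra_simps)
  show "\<forall>u\<in>eigenspace A c. \<forall>k l. k < l \<and> l < DIM('a) \<longrightarrow> rotation_form A b k l u = 0"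
    unfolding eigenspace_def by (auto intro: eig_forms_zero)
qed

lemma czs_scalar:
  fixes A :: "'a::euclidean_space \<Rightarrow> 'a" and b :: "nat \<Rightarrow> 'a"
  assumes lin: "linear A" and ob: "orthonormal_basis b"
    and W: "common_zero_subspace A b W" and w0: "w0 \<in> W" "w0 \<noteq> 0"
  shows "\<exists>c. A w0 = c *\<^sub>R w0 \<and> W \<subseteq> eigenspace A c"
proof -
  have sub: "subspace W" and zz: "\<And>u. u \<in> W \<Longrightarrow> \<exists>c. A u = c *\<^sub>R u"
    using W forms_zero_eig[OF lin ob] unfolding common_zero_subspace_def by blast+
  obtain c where c: "A w0 = c *\<^sub>R w0" using zz w0 by blast
  have "A w = c *\<^sub>R w" if w: "w \<in> W" for w
  proof -
    obtain d where d: "A w = d *\<^sub>R w" using zz w by blast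
    have "w + w0 \<in> W" using sub w w0 by (simp add: subspace_add)
    then obtain e where e: "A (w + w0) = e *\<^sub>R (w + w0)" using zz by blast
    then have "d *\<^sub>R w + c *\<^sub>R w0 = e *\<^sub>R w + e *\<^sub>R w0"
      using c d by (simp add: linear_add[OF lin] scaleR_add_right)
    then have eq: "(d - e) *\<^sub>R w = (e - c) *\<^sub>R w0" by (simp add: algebra_simps)
    show ?thesis
    proof (cases "d = e")
      case True
      then have "(e - c) *\<^sub>R w0 = 0" using eq by simp
      then have "e = c" using w0 by simp
      then show ?thesis using d True by simp
    next
      case False
      then have "w = ((e - c) / (d - e)) *\<^sub>R w0"
        using eq by (metis (no_types, lifting) eq_vector_fraction_iff right_minus_eq)
      then show ?thesis using c by (simp add: linear_scale[OF lin])
    qed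
  qed
  then show ?thesis using c unfolding eigenspace_def by blast
qed

theorem corollary2p9:
  fixes A :: "'a::euclidean_space \<Rightarrow> 'a" and b :: "nat \<Rightarrow> 'a"
  assumes "linear A" and "A \<noteq> (\<lambda>x. 0)" and "orthonormal_basis b"
  shows "(odd DIM('a) \<longrightarrow>
            (\<exists>u. u \<noteq> 0 \<and> (\<forall>k l. k < l \<and> l < DIM('a) \<longrightarrow> rotation_form A b k l u = 0)))
       \<and> (\<forall>W. maximal_common_zero_subspace A b W \<longleftrightarrow>
                (\<exists>c. real_eigenvalue A c \<and> W = eigenspace A c))
       \<and> (\<forall>W c. maximal_common_zero_subspace A b W \<and> real_eigenvalue A c \<and> W = eigenspace A c
                \<longrightarrow> dim W = geom_mult A c)"
proof (intro conjI allI impI)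
  assume "odd DIM('a)"
  then obtain u c where "u \<noteq> 0" "A u = c *\<^sub>R u" using odd_eigen assms by blast
  then show "\<exists>u. u \<noteq> 0 \<and> (\<forall>k l. k < l \<and> l < DIM('a) \<longrightarrow> rotation_form A b k l u = 0)"
    using eig_forms_zero by blast
next
  fix W c assume "maximal_common_zero_subspace A b W \<and> real_eigenvalue A c \<and> W = eigenspace A c"
  then show "dim W = geom_mult A c" by (simp add: geom_mult_def)
next
  fix W
  show "maximal_common_zero_subspace A b W \<longleftrightarrow> (\<exists>c. real_eigenvalue A c \<and> W = eigenspace A c)"
  proof
    assume M: "maximal_common_zero_subspace A b W"
    then have W: "common_zero_subspace A b W" "W \<noteq> {0}"
      and mx: "\<And>W'. common_zero_subspace A b W' \<Longrightarrow> W \<subseteq> W' \<Longrightarrow> W' = W"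
      unfolding maximal_common_zero_subspace_def by blast+
    have "0 \<in> W" using W(1) unfolding common_zero_subspace_def by (simp add: subspace_0)
    then obtain w0 where w0: "w0 \<in> W" "w0 \<noteq> 0" using W(2) by blast
    obtain c where c: "A w0 = c *\<^sub>R w0" "W \<subseteq> eigenspace A c"
      using czs_scalar[OF assms(1,3) W(1) w0] by blast
    have "eigenspace A c = W" using mx[OF eigenspace_czs[OF assms(1)] c(2)] .
    moreover have "real_eigenvalue A c" using c w0 unfolding real_eigenvalue_def by blast
    ultimately show "\<exists>c. real_eigenvalue A c \<and> W = eigenspace A c" by blast
  next
    assume "\<exists>c. real_eigenvalue A c \<and> W = eigenspace A c"
    then obtain c v where W: "W = eigenspace A c" and v: "v \<noteq> 0" "A v = c *\<^sub>R v"
      unfolding real_eigenvalue_def by blast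
    have vW: "v \<in> W" using W v by (simp add: eigenspace_def)
    show "maximal_common_zero_subspace A b W"
      unfolding maximal_common_zero_subspace_def
    proof (intro conjI allI impI)
      show "common_zero_subspace A b W" using W eigenspace_czs[OF assms(1)] by simp
      show "W \<noteq> {0}" using vW v by blast
      fix W' assume H: "common_zero_subspace A b W' \<and> W \<subseteq> W'"
      then have "v \<in> W'" using vW by blast
      then obtain c' where c': "A v = c' *\<^sub>R v" "W' \<subseteq> eigenspace A c'"
        using czs_scalar[OF assms(1,3) _ _ v(1)] H by blast
      have "c' = c" using c' v by (metis scaleR_cancel_right)
      then show "W' = W" using c'(2) H W by blast
    qed
  qed
qed

end
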